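(* Let $\mathbb{F}$ be a field of characteristic $p>0$. Let $P(t,y)\in\mathbb{F}[[t,y]]$ and $\varphi(t)\in\mathbb{F}[[t]]$ satisfy $$P(t,y)=(y-\varphi(t))^{p^{\ell}e}\cdot Q(t,y)$$ for some $Q\in\mathbb{F}[[t,y]]$, $\ell\ge0$ and $e\ge1$ with $\gcd(p,e)=1$. If $\varphi(0)=0$ and $Q(0,0)\neq0$, then $$\varphi(t)^{p^{\ell}}=\mathcal{D}\left(\frac{y^{2p^{\ell}}\cdot \big(\mathcal{H}^{(p^{\ell})}_y P\big)(ty,y)}{e\cdot P(ty,y)}\right),$$ where the quotient is an element of $\mathbb{F}[[t,y]]$.
   Context: For a bivariate power series $F(t,y)=\sum_{i,j\ge0}F_{i,j}t^iy^j$, the diagonal operator is $\mathcal{D}(F)(t)=\sum_{i\ge0}F_{i,i}t^i$. The Hasse derivative of order $i$ with respect to $y$, $\mathcal{H}^{(i)}_y(F)$, is the coefficient of $z^i$ in $F(t,y+z)$ (viewed as a power series in $z$ with coefficients in $\mathbb{F}[[t,y]]$). *)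

theory Defs
  imports "HOL-Computational_Algebra.Formal_Power_Series"
begin

text \<open>Bivariate power series in F[[t,y]] are represented as elements of
  (F[[t]])[[y]], i.e. of type 'a fps fps: the outer variable is y, the inner one t.\<close>

definition bcoeff :: "'a fps fps \<Rightarrow> nat \<Rightarrow> nat \<Rightarrow> 'a" where
  "bcoeff F i j = fps_nth (fps_nth F j) i"

definition bivar :: "(nat \<Rightarrow> nat \<Rightarrow> 'a) \<Rightarrow> 'a fps fps" where
  "bivar f = Abs_fps (\<lambda>j. Abs_fps (\<lambda>i. f i j))"

definition diag :: "'a fps fps \<Rightarrow> 'a fps" where
  "diag F = Abs_fps (\<lambda>i. bcoeff F i i)"

text \<open>Substitution F(t,y) |-> F(t*y, y): the monomial t^a y^b goes to t^a y^(a+b).\<close>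
definition subst_ty :: "'a::zero fps fps \<Rightarrow> 'a fps fps" where
  "subst_ty F = bivar (\<lambda>i j. if i \<le> j then bcoeff F i (j - i) else 0)"

text \<open>Hasse derivative of order k w.r.t. y: coefficient of z^k in F(t,y+z).
  Since (y+z)^b = sum_k (b choose k) y^(b-k) z^k, its coefficient of t^a y^c
  is (c+k choose k) * F_{a,c+k}.\<close>
definition hasse_y :: "nat \<Rightarrow> 'a::comm_semiring_1 fps fps \<Rightarrow> 'a fps fps" where
  "hasse_y k F = bivar (\<lambda>a c. of_nat ((c + k) choose k) * bcoeff F a (c + k))"

end

theory Submission
  imports Defs
begin
unbundle fps_syntax

lemma bcoeff_bivar [simp]: "bcoeff (bivar f) i j = f i j"
  by (simp add: bcoeff_def bivar_def)

lemma bcoeff_mult: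
  "bcoeff (F * G) a b = (\<Sum>j=0..b. \<Sum>i=0..a. bcoeff F i j * bcoeff G (a - i) (b - j))"
  by (simp add: bcoeff_def fps_mult_nth fps_sum_nth)

lemma bcoeff_ext: "(\<And>a b. bcoeff F a b = bcoeff G a b) \<Longrightarrow> F = G"
  by (auto simp: bcoeff_def intro!: fps_ext)

lemma bcoeff_subst: "bcoeff (subst_ty F) a b = (if a \<le> b then bcoeff F a (b - a) else 0)"
  by (simp add: subst_ty_def)

lemma inner_reindex:
  fixes f :: "nat \<Rightarrow> 'a::comm_monoid_add"
  assumes "i \<le> a" "a \<le> b"
  shows "(\<Sum>j'=0..b. if i \<le> j' \<and> a - i \<le> b - j' then f (j' - i) else 0) = (\<Sum>j=0..b-a. f j)"
proof -
  have "(\<Sum>j'=0..b. if i \<le> j' \<and> a - i \<le> b - j' then f (j' - i) else 0)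
      = (\<Sum>j'=0..b. if j' \<in> {0 + i..(b-a) + i} then f (j' - i) else 0)"
    using assms by (intro sum.cong refl) auto
  also have "\<dots> = (\<Sum>j'\<in>{0..b} \<inter> {0 + i..(b-a) + i}. f (j' - i))"
    by (simp only: sum.inter_restrict[OF finite_atLeastAtMost])
  also have "{0..b} \<inter> {0 + i..(b-a) + i} = {0 + i..(b-a) + i}"
    using assms by auto
  also have "(\<Sum>j'\<in>{0 + i..(b-a) + i}. f (j' - i)) = (\<Sum>j=0..b-a. f j)"
    by (simp only: sum.shift_bounds_cl_nat_ivl) simp
  finally show ?thesis .
qed

lemma inner_zero:
  fixes f :: "nat \<Rightarrow> 'a::comm_monoid_add"
  assumes "i \<le> a" "\<not> a \<le> b"
  shows "(\<Sum>j'=0..b. if i \<le> j' \<and> a - i \<le> b - j' then f (j' - i) else 0) = 0"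
  using assms by (intro sum.neutral) auto

lemma subst_mult: "subst_ty (F * G :: 'a::comm_semiring_1 fps fps) = subst_ty F * subst_ty G"
proof (rule bcoeff_ext)
  fix a b
  have r: "bcoeff (subst_ty F * subst_ty G) a b
     = (\<Sum>i=0..a. \<Sum>j'=0..b. if i \<le> j' \<and> a - i \<le> b - j' then
          bcoeff F i (j' - i) * bcoeff G (a - i) (b - a - (j' - i)) else 0)"
    unfolding bcoeff_mult bcoeff_subst
    apply (subst sum.swap)
    apply (intro sum.cong refl)
    apply (auto simp: algebra_simps)
    done
  show "bcoeff (subst_ty (F * G)) a b = bcoeff (subst_ty F * subst_ty G) a b"
  proof (cases "a \<le> b")
    case True
    have "bcoeff (subst_ty (F * G)) a b = (\<Sum>i=0..a. \<Sum>j=0..b-a. bcoeff F i j * bcoeff G (a - i) (b - a - j))"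
      using True by (simp add: bcoeff_subst bcoeff_mult sum.swap[of _ "{0..b-a}"])
    also have "\<dots> = (\<Sum>i=0..a. \<Sum>j'=0..b. if i \<le> j' \<and> a - i \<le> b - j' then
          bcoeff F i (j' - i) * bcoeff G (a - i) (b - a - (j' - i)) else 0)"
    proof (rule sum.cong[OF refl])
      fix i assume "i \<in> {0..a}"
      then show "(\<Sum>j=0..b-a. bcoeff F i j * bcoeff G (a - i) (b - a - j)) =
        (\<Sum>j'=0..b. if i \<le> j' \<and> a - i \<le> b - j' then
          bcoeff F i (j' - i) * bcoeff G (a - i) (b - a - (j' - i)) else 0)"
        using True by (subst inner_reindex) auto
    qed
    also note r[symmetric]
    finally show ?thesis .
  next
    case False
    then show ?thesis unfolding r
      by (simp add: bcoeff_subst, intro sum.neutral ballI inner_zero) auto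
  qed
qed

lemma bcoeff_add [simp]: "bcoeff (F + G) a b = bcoeff F a b + bcoeff G a b"
  by (simp add: bcoeff_def)
lemma bcoeff_diff [simp]: "bcoeff (F - G) a b = bcoeff F a b - bcoeff G a b"
  by (simp add: bcoeff_def)
lemma bcoeff_one [simp]: "bcoeff 1 a b = (if a = 0 \<and> b = 0 then 1 else 0)"
  by (simp add: bcoeff_def)
lemma bcoeff_const [simp]: "bcoeff (fps_const c) a b = (if b = 0 then c $ a else 0)"
  by (simp add: bcoeff_def)

lemma subst_add: "subst_ty (F + G :: 'a::comm_semiring_1 fps fps) = subst_ty F + subst_ty G"
  by (rule bcoeff_ext) (simp add: bcoeff_subst)
lemma subst_diff: "subst_ty (F - G :: 'a::comm_ring_1 fps fps) = subst_ty F - subst_ty G"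
  by (rule bcoeff_ext) (simp add: bcoeff_subst)
lemma subst_one: "subst_ty (1 :: 'a::comm_semiring_1 fps fps) = 1"
  by (rule bcoeff_ext) (auto simp: bcoeff_subst)
lemma bcoeff_X: "bcoeff (fps_X :: 'a::comm_semiring_1 fps fps) a b = (if a = 0 \<and> b = 1 then 1 else 0)"
  by (simp add: bcoeff_def fps_X_def)
lemma subst_X: "subst_ty (fps_X :: 'a::comm_semiring_1 fps fps) = fps_X"
  by (rule bcoeff_ext) (auto simp: bcoeff_subst bcoeff_X)
lemma bcoeff_zero [simp]: "bcoeff 0 a b = 0"
  by (simp add: bcoeff_def)
lemma subst_zero: "subst_ty (0 :: 'a::comm_semiring_1 fps fps) = 0"
  by (rule bcoeff_ext) (simp add: bcoeff_subst)
lemma subst_power: "subst_ty ((F :: 'a::comm_semiring_1 fps fps) ^ n) = subst_ty F ^ n"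
  by (induction n) (simp_all add: subst_one subst_mult)
lemma subst_of_nat: "subst_ty (of_nat n :: 'a::comm_semiring_1 fps fps) = of_nat n"
  by (induction n) (simp_all add: subst_one subst_add subst_zero)
lemma bcoeff_subst_const: "bcoeff (subst_ty (fps_const c)) a b = (if a = b then c $ a else 0)"
  by (auto simp: bcoeff_subst)

lemma sum_delta_mult:
  "finite A \<Longrightarrow> (\<Sum>i\<in>A. (if i = j then x i else 0) * g i) = (if j \<in> A then x j * g j else (0::'a::semiring_1))"
proof -
  assume A: "finite A"
  have "(\<Sum>i\<in>A. (if i = j then x i else 0) * g i) = (\<Sum>i\<in>A. if i = j then x i * g i else 0)"
    by (rule sum.cong) auto
  then show ?thesis using A by (simp add: sum.delta')
qed

lemma bcoeff_T_mult:
  fixes c :: "'a::comm_semiring_1 fps"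
  shows "bcoeff (subst_ty (fps_const c) * G) a b = (\<Sum>j=0..b. if j \<le> a then c $ j * bcoeff G (a - j) (b - j) else 0)"
  unfolding bcoeff_mult bcoeff_subst_const
proof (rule sum.cong[OF refl])
  fix x assume "x \<in> {0..b}"
  show "(\<Sum>i = 0..a. (if i = x then c $ i else 0) * bcoeff G (a - i) (b - x)) =
         (if x \<le> a then c $ x * bcoeff G (a - x) (b - x) else 0)"
    using sum_delta_mult[of "{0..a}" x "\<lambda>i. c $ i" "\<lambda>i. bcoeff G (a - i) (b - x)"] by simp
qed

lemma bcoeff_Xpow_mult: "bcoeff (fps_X ^ k * G) a b = (if b < k then 0 else bcoeff G a (b - k))"
  by (simp add: bcoeff_def fps_X_power_mult_nth)

definition hs :: "nat \<Rightarrow> 'b::comm_semiring_1 fps \<Rightarrow> 'b fps" where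
  "hs k F = Abs_fps (\<lambda>c. of_nat ((c + k) choose k) * F $ (c + k))"

lemma hasse_hs: "hasse_y k (F :: 'a::comm_semiring_1 fps fps) = hs k F"
  by (rule bcoeff_ext) (simp add: hasse_y_def hs_def bcoeff_def bivar_def flip: fps_of_nat)

lemma one_plus_X_power_nth:
  "((1 + fps_X :: 'b::comm_semiring_1 fps) ^ n) $ k = of_nat (n choose k)"
proof (induction n arbitrary: k)
  case 0 then show ?case by (cases k) simp_all
next
  case (Suc n)
  have "(1 + fps_X :: 'b fps) ^ Suc n = (1 + fps_X) ^ n + fps_X * (1 + fps_X) ^ n"
    by (simp add: algebra_simps)
  then show ?case using Suc by (cases k) (simp_all add: algebra_simps)
qed

lemma one_plus_Xq_power:
  "\<exists>D. (1 + fps_X ^ q :: 'b::comm_ring_1 fps) ^ s = 1 + fps_const (of_nat s) * fps_X ^ q + fps_X ^ (2 * q) * D"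
proof (induction s)
  case 0 then show ?case by (intro exI[of _ 0]) simp
next
  case (Suc s)
  then obtain D where D: "(1 + fps_X ^ q :: 'b fps) ^ s = 1 + fps_const (of_nat s) * fps_X ^ q + fps_X ^ (2 * q) * D" by blast
  have X2: "fps_X ^ (q * 2) = (fps_X ^ q * fps_X ^ q :: 'b fps)"
      by (simp add: mult_2_right power_add)
    show ?case
    apply (intro exI[of _ "fps_const (of_nat s) + D + fps_X ^ q * D"])
    apply (simp only: power_Suc D)
    apply (simp add: algebra_simps power_add mult_2 X2 flip: fps_const_add fps_of_nat)
    done
qed

lemma choose_prime_power_mod:
  assumes pr: "prime CHAR('b::comm_ring_1)"
  shows "(of_nat (n choose (CHAR('b) ^ l)) :: 'b) = of_nat (n div CHAR('b) ^ l)"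
proof -
  define q where "q = CHAR('b) ^ l"
  have q0: "q > 0" using pr by (simp add: q_def prime_gt_0_nat)
  define s r where "s = n div q" and "r = n mod q"
  have n: "n = r + q * s" by (simp add: s_def r_def)
  have rq: "r < q" using q0 by (simp add: r_def)
  have fd: "(1 + fps_X :: 'b fps) ^ q = 1 + fps_X ^ q"
    using pr by (subst freshmans_dream'[where n = l]) (simp_all add: q_def)
  obtain D where D: "(1 + fps_X ^ q :: 'b fps) ^ s = 1 + fps_const (of_nat s) * fps_X ^ q + fps_X ^ (2 * q) * D"
    using one_plus_Xq_power by blast
  have "(of_nat (n choose q) :: 'b) = ((1 + fps_X :: 'b fps) ^ n) $ q"
    by (simp add: one_plus_X_power_nth)
  also have "(1 + fps_X :: 'b fps) ^ n = (1 + fps_X) ^ r * ((1 + fps_X) ^ q) ^ s"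
    by (simp add: n power_add power_mult)
  also have "\<dots> = (1 + fps_X) ^ r + fps_const (of_nat s) * (fps_X ^ q * (1 + fps_X) ^ r)
       + fps_X ^ (2 * q) * ((1 + fps_X) ^ r * D)"
    unfolding fd D by (simp add: algebra_simps)
  also have "\<dots> $ q = of_nat s"
    using rq q0 by (simp add: one_plus_X_power_nth fps_X_power_mult_nth binomial_eq_0)
  finally show ?thesis by (simp add: q_def s_def)
qed

lemma hs_diff: "hs k (F - G :: 'b::comm_ring_1 fps) = hs k F - hs k G"
  by (rule fps_ext) (simp add: hs_def algebra_simps)
lemma hs_const_mult: "hs k (fps_const c * F :: 'b::comm_ring_1 fps) = fps_const c * hs k F"
  by (rule fps_ext) (simp add: hs_def algebra_simps)

lemma hs_Xq_mult:
  assumes pr: "prime CHAR('b::comm_ring_1)" and q: "q = CHAR('b) ^ l"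
  shows "hs q (fps_X ^ q * G :: 'b fps) = fps_X ^ q * hs q G + G"
proof (rule fps_ext)
  fix c
  have q0: "q > 0" using pr by (simp add: q prime_gt_0_nat)
  have L: "\<And>n. (of_nat (n choose q) :: 'b) = of_nat (n div q)"
    using choose_prime_power_mod[OF pr] q by simp
  have d: "(c + q) div q = c div q + 1" using q0 by simp
  show "hs q (fps_X ^ q * G) $ c = (fps_X ^ q * hs q G + G) $ c"
  proof (cases "c < q")
    case True
    then show ?thesis by (simp add: hs_def fps_X_power_mult_nth L d)
  next
    case False
    then have "c - q + q = c" by simp
    with False show ?thesis by (simp add: hs_def fps_X_power_mult_nth L d distrib_right)
  qed
qed

lemma hs_A_mult:
  assumes pr: "prime CHAR('b::comm_ring_1)" and q: "q = CHAR('b) ^ l"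
  shows "hs q ((fps_X ^ q - fps_const k) * G :: 'b fps) = (fps_X ^ q - fps_const k) * hs q G + G"
proof -
  have "(fps_X ^ q - fps_const k) * G = fps_X ^ q * G - fps_const k * G"
    by (simp add: left_diff_distrib)
  then show ?thesis
    by (simp only: hs_diff hs_const_mult hs_Xq_mult[OF pr q]) (simp add: algebra_simps)
qed

lemma hs_A_pow:
  assumes pr: "prime CHAR('b::comm_ring_1)" and q: "q = CHAR('b) ^ l"
  shows "hs q ((fps_X ^ q - fps_const k) ^ Suc m * G :: 'b fps)
     = (fps_X ^ q - fps_const k) ^ Suc m * hs q G + of_nat (Suc m) * (fps_X ^ q - fps_const k) ^ m * G"
proof (induction m)
  case 0 then show ?case using hs_A_mult[OF pr q] by simp
next
  case (Suc m)
  have "hs q ((fps_X ^ q - fps_const k) ^ Suc (Suc m) * G)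
      = hs q ((fps_X ^ q - fps_const k) * ((fps_X ^ q - fps_const k) ^ Suc m * G))"
    by (simp add: mult.assoc)
  also have "\<dots> = (fps_X ^ q - fps_const k) * hs q ((fps_X ^ q - fps_const k) ^ Suc m * G)
        + (fps_X ^ q - fps_const k) ^ Suc m * G"
    by (rule hs_A_mult[OF pr q])
  also have "\<dots> = (fps_X ^ q - fps_const k) ^ Suc (Suc m) * hs q G + of_nat (Suc (Suc m)) * (fps_X ^ q - fps_const k) ^ Suc m * G"
    unfolding Suc by (simp add: algebra_simps)
  finally show ?case .
qed

lemma bcoeff_cc_mult: fixes k :: "'a::comm_semiring_1" shows "bcoeff (fps_const (fps_const k) * F) a b = k * bcoeff F a b"
  by (simp add: bcoeff_def)

theorem theoremA3:
  fixes P Q :: "'a::field fps fps" and \<phi> :: "'a fps" and l e :: nat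
  defines "p \<equiv> CHAR('a)"
  assumes char_pos: "p > 0"
    and e_pos: "e \<ge> 1"
    and coprime: "coprime p e"
    and factor: "P = (fps_X - fps_const \<phi>) ^ (p ^ l * e) * Q"
    and phi0: "fps_nth \<phi> 0 = 0"
    and Q00: "bcoeff Q 0 0 \<noteq> 0"
  shows "(\<exists>R. of_nat e * subst_ty P * R = fps_X ^ (2 * p ^ l) * subst_ty (hasse_y (p ^ l) P))
       \<and> (\<forall>R. of_nat e * subst_ty P * R = fps_X ^ (2 * p ^ l) * subst_ty (hasse_y (p ^ l) P)
              \<longrightarrow> \<phi> ^ (p ^ l) = diag R)"
proof -
  have pr: "prime p" unfolding p_def using char_pos p_def prime_CHAR_semidom by blast
  define q where "q = p ^ l"
  have q0: "q > 0" using pr by (simp add: q_def prime_gt_0_nat)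
  have pr2: "prime CHAR('a fps)" using pr by (simp add: p_def)
  have q2: "q = CHAR('a fps) ^ l" by (simp add: q_def p_def)
  have pr3: "prime CHAR('a fps fps)" using pr by (simp add: p_def)
  obtain e' where e': "e = Suc e'" using e_pos by (cases e) auto
  have e0: "(of_nat e :: 'a) \<noteq> 0"
  proof
    assume "(of_nat e :: 'a) = 0"
    then have "p dvd e" by (simp add: of_nat_eq_0_iff_char_dvd p_def)
    then have "p dvd 1" using coprime by (metis coprime_common_divisor dvd_refl)
    then show False using pr by auto
  qed
  define c where "c = \<phi> ^ q"
  have c0: "c $ 0 = 0" using q0 phi0 by (simp add: c_def fps_nth_power_0)
  define A :: "'a fps fps" where "A = fps_X ^ q - fps_const c"
  have frob: "(fps_X - fps_const \<phi> :: 'a fps fps) ^ q = A"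
  proof -
    have "((fps_X - fps_const \<phi>) + fps_const \<phi> :: 'a fps fps) ^ q
          = (fps_X - fps_const \<phi>) ^ q + fps_const \<phi> ^ q"
      using pr3 by (subst freshmans_dream'[where n = l]) (simp_all add: q_def p_def)
    then show ?thesis by (simp add: A_def c_def algebra_simps)
  qed
  have PA: "P = A ^ e * Q"
    by (simp add: factor power_mult frob flip: q_def)
  have HP: "hasse_y q P = A ^ e * hs q Q + of_nat e * A ^ e' * Q"
    unfolding hasse_hs PA e' A_def by (rule hs_A_pow[OF pr2 q2])
  define W :: "'a fps fps" where "W = subst_ty (fps_const c)"
  define SA where "SA = (fps_X ^ q - W :: 'a fps fps)"
  have SA: "subst_ty A = SA"
    by (simp add: A_def SA_def W_def subst_diff subst_power subst_X)
  have SP: "subst_ty P = SA ^ e * subst_ty Q"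
    by (simp add: PA subst_mult subst_power SA)
  have SHP: "subst_ty (hasse_y q P) = SA ^ e * subst_ty (hs q Q) + of_nat e * SA ^ e' * subst_ty Q"
    by (simp add: HP subst_mult subst_add subst_power subst_of_nat SA)
  define \<Psi> :: "'a fps fps" where "\<Psi> = bivar (\<lambda>i j. if i = Suc j then \<phi> $ i else 0)"
  have XPsi: "fps_X * \<Psi> = subst_ty (fps_const \<phi>)"
  proof (rule bcoeff_ext)
    fix a b
    show "bcoeff (fps_X * \<Psi>) a b = bcoeff (subst_ty (fps_const \<phi>)) a b"
      using bcoeff_Xpow_mult[of 1 \<Psi> a b] phi0
      by (auto simp: \<Psi>_def bcoeff_subst_const)
  qed
  have W: "W = fps_X ^ q * \<Psi> ^ q"
    by (simp add: W_def c_def subst_power flip: fps_const_power XPsi power_mult_distrib)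
  define B where "B = 1 - \<Psi> ^ q"
  have SAB: "SA = fps_X ^ q * B" by (simp add: SA_def W B_def algebra_simps)
  define u where "u = B $ 0"
  have Psi00: "\<Psi> $ 0 $ 0 = 0" by (simp add: \<Psi>_def bivar_def)
  have u0: "u $ 0 = 1" using q0 Psi00 by (simp add: u_def B_def fps_nth_power_0)
  define J where "J = fps_right_inverse B (inverse u)"
  have BJ: "B * J = 1" unfolding J_def
    by (rule fps_right_inverse) (simp add: u_def[symmetric] inverse_mult_eq_1' u0)
  define R1 where "R1 = fps_X ^ q * J"
  have X2: "fps_X ^ (2 * q) = (fps_X ^ q * fps_X ^ q :: 'a fps fps)"
    by (simp add: mult_2 power_add)
  have SAR1: "SA * R1 = fps_X ^ (2 * q)"
  proof -
    have "SA * R1 = fps_X ^ q * fps_X ^ q * (B * J)" by (simp add: SAB R1_def mult_ac)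
    then show ?thesis by (simp add: BJ X2)
  qed
  define Q' where "Q' = fps_right_inverse Q (inverse (Q $ 0))"
  have QQ': "Q * Q' = 1" unfolding Q'_def
    by (rule fps_right_inverse, rule inverse_mult_eq_1') (use Q00 in \<open>simp add: bcoeff_def\<close>)
  have SQQ': "subst_ty Q * subst_ty Q' = 1"
    by (simp add: QQ' subst_one flip: subst_mult)
  define E :: "'a fps fps" where "E = fps_const (fps_const (inverse (of_nat e)))"
  have eE: "of_nat e * E = 1"
    using e0 by (simp add: E_def flip: fps_of_nat)
  define R0 where "R0 = R1 + fps_X ^ (2 * q) * (subst_ty (hs q Q * Q') * E)"
  have eq0: "of_nat e * subst_ty P * R0 = fps_X ^ (2 * q) * subst_ty (hasse_y q P)"
  proof -
    have "of_nat e * subst_ty P * R0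
        = of_nat e * SA ^ e' * subst_ty Q * (SA * R1)
          + fps_X ^ (2 * q) * SA ^ e * subst_ty (hs q Q) * (subst_ty Q * subst_ty Q') * (of_nat e * E)"
      by (simp add: SP R0_def e' subst_mult algebra_simps)
    also have "\<dots> = of_nat e * SA ^ e' * subst_ty Q * fps_X ^ (2 * q)
          + fps_X ^ (2 * q) * SA ^ e * subst_ty (hs q Q) * 1 * 1"
      by (simp only: SAR1 SQQ' eE)
    also have "\<dots> = fps_X ^ (2 * q) * subst_ty (hasse_y q P)"
      by (simp add: SHP algebra_simps)
    finally show ?thesis .
  qed
  have nz: "of_nat e * subst_ty P \<noteq> 0"
  proof -
    have "(of_nat e :: 'a fps fps) \<noteq> 0" using e0 by (simp flip: fps_of_nat)
    moreover have "B \<noteq> 0" using BJ by auto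
    moreover have "subst_ty Q \<noteq> 0" using SQQ' by auto
    ultimately show ?thesis by (simp add: SP SAB)
  qed
  define K where "K = R1 - fps_X ^ q - W"
  have XK: "fps_X ^ q * K = W * W + W * K"
  proof -
    have h: "fps_X ^ q * R1 - fps_X ^ (2 * q) = W * R1"
      using SAR1 by (simp add: SA_def algebra_simps)
    have "fps_X ^ q * K = (fps_X ^ q * R1 - fps_X ^ (2 * q)) - fps_X ^ q * W"
      unfolding X2 by (simp add: K_def algebra_simps)
    also have "\<dots> = W * W + W * K" unfolding h by (simp add: K_def algebra_simps)
    finally show ?thesis .
  qed
  have Kz: "\<forall>b. a \<le> b \<longrightarrow> bcoeff K a b = 0" for a
  proof (induction a rule: less_induct)
    case (less a)
    show ?case
    proof (intro allI impI)
      fix b assume ab: "a \<le> b"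
      have "bcoeff K a b = bcoeff (fps_X ^ q * K) a (b + q)"
        by (simp add: bcoeff_Xpow_mult)
      also have "\<dots> = bcoeff (W * W) a (b + q) + bcoeff (W * K) a (b + q)"
        by (simp add: XK)
      also have "bcoeff (W * W) a (b + q) = 0"
        unfolding W_def bcoeff_T_mult
        using ab q0 by (intro sum.neutral) (auto simp: bcoeff_subst_const)
      also have "bcoeff (W * K) a (b + q) = 0"
        unfolding W_def bcoeff_T_mult
      proof (intro sum.neutral ballI)
        fix j assume "j \<in> {0..b+q}"
        show "(if j \<le> a then c $ j * bcoeff K (a - j) (b + q - j) else 0) = 0"
        proof (cases "j = 0")
          case True then show ?thesis by (simp add: c0)
        next
          case False
          then show ?thesis using less[of "a - j"] ab by auto
        qed
      qed
      finally show "bcoeff K a b = 0" by simp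
    qed
  qed
  have diag0: "diag R0 = c"
  proof (rule fps_ext)
    fix i
    have R1eq: "R1 = fps_X ^ q * 1 + W + K" by (simp add: K_def)
    have "bcoeff (fps_X ^ q * 1 :: 'a fps fps) i i = 0"
      using q0 by (simp only: bcoeff_Xpow_mult) auto
    moreover have "bcoeff K i i = 0" using Kz by auto
    moreover have "bcoeff W i i = c $ i" by (simp add: W_def bcoeff_subst_const)
    moreover have "bcoeff (fps_X ^ (2 * q) * (subst_ty (hs q Q * Q') * E)) i i = 0"
      using q0 by (simp add: bcoeff_Xpow_mult E_def mult.commute[of _ "fps_const _"] bcoeff_cc_mult bcoeff_subst; arith)
    ultimately show "diag R0 $ i = c $ i"
      by (simp add: diag_def R0_def R1eq)
  qed
  show ?thesis
  proof
    show "\<exists>R. of_nat e * subst_ty P * R = fps_X ^ (2 * p ^ l) * subst_ty (hasse_y (p ^ l) P)"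
      using eq0 by (auto simp: q_def)
  next
    show "\<forall>R. of_nat e * subst_ty P * R = fps_X ^ (2 * p ^ l) * subst_ty (hasse_y (p ^ l) P)
              \<longrightarrow> \<phi> ^ (p ^ l) = diag R"
    proof (intro allI impI)
      fix R assume "of_nat e * subst_ty P * R = fps_X ^ (2 * p ^ l) * subst_ty (hasse_y (p ^ l) P)"
      then have "of_nat e * subst_ty P * R = of_nat e * subst_ty P * R0" using eq0 by (simp add: q_def)
      then have "R = R0" using nz by simp
      then show "\<phi> ^ (p ^ l) = diag R" using diag0 by (simp add: c_def q_def)
    qed
  qed
qed

end
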